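(* Let $x=(x_1,\dots,x_n)$ and $y=(y_1,\dots,y_n)$ be vectors with nonnegative real entries, and assume $y$ is not a permutation of $x$ (i.e., the multisets $\{x_1,\dots,x_n\}$ and $\{y_1,\dots,y_n\}$ differ). Write $\tilde z=(1+z_1,\dots,1+z_n)$ for a vector $z$. If $x\prec_{\log} y$, then $\tilde x\prec_{\mathrm{wlog}}\tilde y$ but $\tilde x\not\prec_{\log}\tilde y$. Consequently, $$\prod_{k=1}^n(1+x_k)<\prod_{k=1}^n(1+y_k).$$ *)

theory Defs
  imports Complex_Main "HOL-Library.Multiset"
begin

definition decr :: "real list \<Rightarrow> real list" where
  "decr xs = rev (sort xs)"

definition wlog_maj :: "real list \<Rightarrow> real list \<Rightarrow> bool" where
  "wlog_maj xs ys \<longleftrightarrow> length xs = length ys \<and>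
     (\<forall>k\<in>{1..length xs}. prod_list (take k (decr xs)) \<le> prod_list (take k (decr ys)))"

definition log_maj :: "real list \<Rightarrow> real list \<Rightarrow> bool" where
  "log_maj xs ys \<longleftrightarrow> wlog_maj xs ys \<and> prod_list xs = prod_list ys"

definition tilde :: "real list \<Rightarrow> real list" where
  "tilde zs = map (\<lambda>z. 1 + z) zs"

end

theory Submission
  imports Defs
begin

lemma prod_list_nth: "prod_list (xs::real list) = (\<Prod>i<length xs. xs!i)"
  by (induct xs) (simp_all add: prod.lessThan_Suc_shift del: prod.lessThan_Suc)

lemma exp_strict: assumes "(u::real) \<noteq> 0" shows "1 + u < exp u"
proof (cases "1 + u/2 \<ge> 0")
  case True
  have "(1 + u/2)^2 \<le> exp (u/2) ^ 2"
    by (rule power_mono) (use True in auto)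
  also have "\<dots> = exp u" by (simp add: exp_double[symmetric] power2_eq_square exp_add[symmetric])
  finally have "(1+u/2)^2 \<le> exp u" .
  moreover have "0 < u*u" by (metis assms not_real_square_gt_zero)
  then have "1 + u < (1+u/2)^2" by (simp add: power2_eq_square field_simps)
  ultimately show ?thesis by linarith
next
  case False
  then have "1 + u < 0" by linarith
  then show ?thesis using exp_gt_zero[of u] by linarith
qed

lemma conv_strict:
  fixes w t :: real
  assumes "0 < w" "w < 1" "t \<noteq> 0"
  shows "exp (w*t) < (1-w) + w * exp t"
proof -
  have e1: "exp t = exp (w*t) * exp ((1-w)*t)" by (simp add: exp_add[symmetric] algebra_simps)
  have e2: "1 = exp (w*t) * exp (-(w*t))" by (simp add: exp_add[symmetric])
  have h1: "1 + (1-w)*t < exp ((1-w)*t)" using assms by (intro exp_strict) auto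
  have h2: "1 + (-(w*t)) < exp (-(w*t))" using assms by (intro exp_strict) auto
  have p: "exp (w*t) > 0" by simp
  have "w * exp t > w * (exp (w*t) * (1 + (1-w)*t))"
    using e1 h1 p assms by (simp add: mult_strict_left_mono)
  moreover have "(1-w) * 1 > (1-w) * (exp (w*t) * (1 - w*t))"
    using h2 p assms by (subst e2) (simp add: mult_strict_left_mono)
  ultimately have "(1-w) + w*exp t > exp (w*t) * (w*(1+(1-w)*t) + (1-w)*(1-w*t))"
    by (simp add: algebra_simps)
  moreover have "w*(1+(1-w)*t) + (1-w)*(1-w*t) = 1" by (simp add: algebra_simps)
  ultimately show ?thesis by simp
qed

lemma term_ineq:
  fixes a b :: real
  assumes "0 < a" "0 < b"
  shows "a/(1+a) * (ln b - ln a) \<le> ln (1+b) - ln (1+a)"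
    and "a \<noteq> b \<Longrightarrow> a/(1+a) * (ln b - ln a) < ln (1+b) - ln (1+a)"
proof -
  define w where "w = a/(1+a)"
  define t where "t = ln b - ln a"
  have w: "0 < w" "w < 1" using assms by (auto simp: w_def field_simps)
  have et: "exp t = b/a" using assms by (simp add: t_def exp_diff)
  have eq: "(1-w) + w * exp t = (1+b)/(1+a)" using assms
    by (simp add: et w_def field_simps)
  have r: "ln (1+b) - ln (1+a) = ln ((1+b)/(1+a))" using assms by (simp add: ln_div)
  show strict: "a \<noteq> b \<Longrightarrow> a/(1+a) * (ln b - ln a) < ln (1+b) - ln (1+a)"
  proof -
    assume "a \<noteq> b"
    then have "t \<noteq> 0" using assms by (simp add: t_def)
    then have "exp (w*t) < (1-w) + w * exp t" by (rule conv_strict[OF w])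
    then have "exp (w*t) < (1+b)/(1+a)" using eq by linarith
    then have "ln (exp (w*t)) < ln ((1+b)/(1+a))"
      using assms by (subst ln_less_cancel_iff) auto
    then show ?thesis using r by (simp add: w_def t_def)
  qed
  show "a/(1+a) * (ln b - ln a) \<le> ln (1+b) - ln (1+a)"
    using strict by (cases "a = b") force+
qed


lemma main_ineq:
  fixes a b :: "real list"
  assumes len: "length a = n" "length b = n"
  and dec: "\<And>i j. i \<le> j \<Longrightarrow> j < n \<Longrightarrow> a!j \<le> a!i"
  and a0: "\<And>i. i<n \<Longrightarrow> a!i \<ge> 0" and b0: "\<And>i. i<n \<Longrightarrow> b!i \<ge> 0"
  and pre: "\<And>j. j\<le>n \<Longrightarrow> (\<Prod>i<j. a!i) \<le> (\<Prod>i<j. b!i)"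
  shows "(\<Prod>i<n. 1 + a!i) \<le> (\<Prod>i<n. 1 + b!i) \<and>
         (a \<noteq> b \<longrightarrow> (\<Prod>i<n. 1 + a!i) < (\<Prod>i<n. 1 + b!i))"
proof -
  define w where "w i = (if i<n then a!i/(1+a!i) else 0)" for i
  define s where "s i = ln (b!i) - ln (a!i)" for i
  define d where "d i = ln (1+b!i) - ln (1+a!i)" for i
  have pos: "0 < a!l \<and> 0 < b!l" if k: "k<n" "0<a!k" "l\<le>k" for k l
  proof -
    have al: "0 < a!l" using dec[of l k] k by auto
    have pa: "0 < (\<Prod>i<Suc k. a!i)"
    proof (rule prod_pos)
      fix i assume "i \<in> {..<Suc k}"
      then show "0 < a!i" using dec[of i k] k by auto
    qed
    then have pb: "0 < (\<Prod>i<Suc k. b!i)" using pre[of "Suc k"] k by linarith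
    have "b!l \<noteq> 0"
    proof
      assume "b!l = 0"
      then have "(\<Prod>i<Suc k. b!i) = 0" using k by (intro prod_zero) auto
      then show False using pb by linarith
    qed
    then show ?thesis using al b0[of l] k by auto
  qed
  have Spos: "0 \<le> (\<Sum>i<Suc k. s i)" if k: "k < n" "0 < a!k" for k
  proof -
    have pa: "\<And>i. i \<in> {..<Suc k} \<Longrightarrow> 0 < a!i" and pb: "\<And>i. i \<in> {..<Suc k} \<Longrightarrow> 0 < b!i"
      using pos[OF k] by auto
    have "(\<Sum>i<Suc k. s i) = ln (\<Prod>i<Suc k. b!i) - ln (\<Prod>i<Suc k. a!i)"
    proof -
      have lb: "ln (\<Prod>i<Suc k. b!i) = (\<Sum>i<Suc k. ln (b!i))"
        by (rule ln_prod) (use pb in force)+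
      have la: "ln (\<Prod>i<Suc k. a!i) = (\<Sum>i<Suc k. ln (a!i))"
        by (rule ln_prod) (use pa in force)+
      show ?thesis unfolding s_def sum_subtractf lb la ..
    qed
    moreover have "0 < (\<Prod>i<Suc k. a!i)" using pa by (intro prod_pos) auto
    moreover have "(\<Prod>i<Suc k. a!i) \<le> (\<Prod>i<Suc k. b!i)" using pre[of "Suc k"] k by simp
    ultimately show ?thesis by simp
  qed
  have w0: "0 \<le> w k" for k using a0[of k] by (simp add: w_def)
  have wdec: "w (Suc k) \<le> w k" for k
  proof (cases "Suc k < n")
    case True
    have "a!(Suc k) \<le> a!k" "0 \<le> a!(Suc k)" using dec[of k "Suc k"] a0[of "Suc k"] True by auto
    then have "a!(Suc k)/(1+a!(Suc k)) \<le> a!k/(1+a!k)" by (simp add: field_simps)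
    then show ?thesis using True by (simp add: w_def)
  next
    case False
    then show ?thesis using w0[of k] by (simp add: w_def)
  qed
  have wz: "w k = 0 \<and> w (Suc k) = 0" if "k<n" "a!k = 0" for k
    using wdec[of k] w0[of "Suc k"] that by (simp add: w_def)
  have abel: "w k * (\<Sum>i<k. s i) \<le> (\<Sum>i<k. w i * s i)" if "k \<le> n" for k
    using that
  proof (induction k)
    case 0
    then show ?case by simp
  next
    case (Suc k)
    then have IH: "w k * (\<Sum>i<k. s i) \<le> (\<Sum>i<k. w i * s i)" and kn: "k < n" by auto
    have "w (Suc k) * (\<Sum>i<Suc k. s i) \<le> w k * (\<Sum>i<Suc k. s i)"
    proof (cases "a!k = 0")
      case True then show ?thesis using wz[OF kn] by simp
    next
      case False
      then have "0 < a!k" using a0[of k] kn by auto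
      then show ?thesis using Spos[OF kn] wdec[of k] by (intro mult_right_mono) auto
    qed
    also have "\<dots> = w k * (\<Sum>i<k. s i) + w k * s k" by (simp add: algebra_simps)
    also have "\<dots> \<le> (\<Sum>i<Suc k. w i * s i)" using IH by simp
    finally show ?case .
  qed
  have wn: "w n = 0" by (simp add: w_def)
  have sum0: "0 \<le> (\<Sum>i<n. w i * s i)" using abel[of n] wn by simp
  have trm: "w i * s i \<le> d i \<and> (a!i \<noteq> b!i \<longrightarrow> w i * s i < d i)" if i: "i<n" for i
  proof (cases "a!i = 0")
    case True
    then have "w i = 0" using wz[OF i] by simp
    moreover have "0 \<le> ln (1 + b!i)" using b0[OF i] by simp
    moreover have "b!i \<noteq> 0 \<Longrightarrow> 0 < ln (1 + b!i)" using b0[OF i] by (intro ln_gt_zero) auto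
    ultimately show ?thesis using True by (auto simp: d_def)
  next
    case False
    then have ai: "0 < a!i" using a0[OF i] by auto
    then have bi: "0 < b!i" using pos[OF i ai] by auto
    show ?thesis using term_ineq[OF ai bi] i by (simp add: w_def s_def d_def)
  qed
  have pA: "0 < (\<Prod>i<n. 1 + a!i)" using a0 by (intro prod_pos) (smt (verit) lessThan_iff)
  have pB: "0 < (\<Prod>i<n. 1 + b!i)" using b0 by (intro prod_pos) (smt (verit) lessThan_iff)
  have sd: "(\<Sum>i<n. d i) = ln (\<Prod>i<n. 1 + b!i) - ln (\<Prod>i<n. 1 + a!i)"
  proof -
    have lb: "ln (\<Prod>i<n. 1 + b!i) = (\<Sum>i<n. ln (1 + b!i))"
      by (rule ln_prod) (use b0 in force)+
    have la: "ln (\<Prod>i<n. 1 + a!i) = (\<Sum>i<n. ln (1 + a!i))"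
      by (rule ln_prod) (use a0 in force)+
    show ?thesis unfolding d_def sum_subtractf lb la ..
  qed
  have le: "(\<Sum>i<n. w i * s i) \<le> (\<Sum>i<n. d i)" using trm by (intro sum_mono) auto
  have A: "(\<Prod>i<n. 1 + a!i) \<le> (\<Prod>i<n. 1 + b!i)"
  proof -
    have "ln (\<Prod>i<n. 1 + a!i) \<le> ln (\<Prod>i<n. 1 + b!i)" using le sum0 sd by linarith
    then show ?thesis using pA pB by simp
  qed
  have B: "(\<Prod>i<n. 1 + a!i) < (\<Prod>i<n. 1 + b!i)" if ab: "a \<noteq> b"
  proof -
    obtain j where j: "j < n" "a!j \<noteq> b!j" using ab len nth_equalityI[of a b] by auto
    have "(\<Sum>i<n. w i * s i) < (\<Sum>i<n. d i)"
      by (rule sum_strict_mono_ex1) (use trm j in auto)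
    then have "ln (\<Prod>i<n. 1 + a!i) < ln (\<Prod>i<n. 1 + b!i)" using sum0 sd by linarith
    then show ?thesis using pA pB by simp
  qed
  show ?thesis using A B by auto
qed


lemma main_take:
  fixes X Y :: "real list"
  assumes len: "length X = n" "length Y = n"
  and dec: "\<And>i j. i \<le> j \<Longrightarrow> j < n \<Longrightarrow> X!j \<le> X!i"
  and a0: "\<And>i. i<n \<Longrightarrow> X!i \<ge> 0" and b0: "\<And>i. i<n \<Longrightarrow> Y!i \<ge> 0"
  and pre: "\<And>j. j\<le>n \<Longrightarrow> (\<Prod>i<j. X!i) \<le> (\<Prod>i<j. Y!i)"
  and k: "k \<le> n"
  shows "(\<Prod>i<k. 1 + X!i) \<le> (\<Prod>i<k. 1 + Y!i) \<and>
         (take k X \<noteq> take k Y \<longrightarrow> (\<Prod>i<k. 1 + X!i) < (\<Prod>i<k. 1 + Y!i))"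
proof -
  have c: "\<And>f (Z::real list) j. j \<le> k \<Longrightarrow> (\<Prod>i<j. f (take k Z ! i)) = (\<Prod>i<j. f (Z!i))"
    by (rule prod.cong) auto
  have "(\<Prod>i<k. 1 + take k X!i) \<le> (\<Prod>i<k. 1 + take k Y!i) \<and>
         (take k X \<noteq> take k Y \<longrightarrow> (\<Prod>i<k. 1 + take k X!i) < (\<Prod>i<k. 1 + take k Y!i))"
  proof (rule main_ineq)
    show "length (take k X) = k" "length (take k Y) = k" using len k by auto
    show "\<And>i j. i \<le> j \<Longrightarrow> j < k \<Longrightarrow> take k X!j \<le> take k X!i" using dec k by auto
    show "\<And>i. i<k \<Longrightarrow> take k X!i \<ge> 0" using a0 k by auto
    show "\<And>i. i<k \<Longrightarrow> take k Y!i \<ge> 0" using b0 k by auto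
    show "\<And>j. j\<le>k \<Longrightarrow> (\<Prod>i<j. take k X!i) \<le> (\<Prod>i<j. take k Y!i)"
      using pre k c[of _ "\<lambda>x. x"] by simp
  qed
  then show ?thesis using c[of k "\<lambda>x. 1 + x"] by simp
qed

lemma prod_take: "j \<le> length (xs::real list) \<Longrightarrow> prod_list (take j xs) = (\<Prod>i<j. xs!i)"
  by (simp add: prod_list_nth min_def)

lemma prod_take_tilde: "j \<le> length (xs::real list) \<Longrightarrow> prod_list (take j (tilde xs)) = (\<Prod>i<j. 1 + xs!i)"
  by (simp add: prod_list_nth min_def tilde_def)

lemma decr_len: "length (decr x) = length x" by (simp add: decr_def)
lemma decr_mset: "mset (decr x) = mset x" by (simp add: decr_def)
lemma decr_dec: "i \<le> j \<Longrightarrow> j < length x \<Longrightarrow> decr x ! j \<le> decr x ! i"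
proof -
  assume ij: "i \<le> j" "j < length x"
  have "sorted_wrt (\<ge>) (decr x)" by (simp add: decr_def sorted_wrt_rev)
  then show ?thesis using ij sorted_wrt_nth_less[of "(\<ge>)" "decr x" i j]
    by (cases "i = j") (auto simp: decr_len)
qed
lemma decr_tilde: "decr (tilde x) = tilde (decr x)"
proof -
  have "sort (map (\<lambda>z. 1 + z) x) = map (\<lambda>z. 1 + z) (sort x)"
    by (rule properties_for_sort) (auto simp: sorted_map)
  then show ?thesis by (simp add: decr_def tilde_def rev_map)
qed
lemma prod_tilde_perm: "mset a = mset b \<Longrightarrow> prod_list (tilde a) = prod_list (tilde b)"
  by (metis mset_map prod_mset_prod_list tilde_def)

theorem lemma4:
  fixes x y :: "real list" and n :: nat
  assumes "length x = n" and "length y = n"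
    and "\<forall>i<n. x ! i \<ge> 0" and "\<forall>i<n. y ! i \<ge> 0"
    and "mset x \<noteq> mset y"
    and "log_maj x y"
  shows "wlog_maj (tilde x) (tilde y) \<and> \<not> log_maj (tilde x) (tilde y)
         \<and> (\<Prod>k<n. 1 + x ! k) < (\<Prod>k<n. 1 + y ! k)"
proof -
  define X where "X = decr x"
  define Y where "Y = decr y"
  have lX: "length X = n" and lY: "length Y = n" using assms by (auto simp: X_def Y_def decr_len)
  have dec: "\<And>i j. i \<le> j \<Longrightarrow> j < n \<Longrightarrow> X!j \<le> X!i" using decr_dec assms(1) X_def by blast
  have a0: "\<And>i. i<n \<Longrightarrow> X!i \<ge> 0"
  proof -
    fix i assume "i<n"
    then have "X!i \<in> set x" using lX by (metis X_def decr_mset nth_mem set_mset_mset)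
    then show "X!i \<ge> 0" using assms(1,3) by (auto simp: in_set_conv_nth)
  qed
  have b0: "\<And>i. i<n \<Longrightarrow> Y!i \<ge> 0"
  proof -
    fix i assume "i<n"
    then have "Y!i \<in> set y" using lY by (metis Y_def decr_mset nth_mem set_mset_mset)
    then show "Y!i \<ge> 0" using assms(2,4) by (auto simp: in_set_conv_nth)
  qed
  have wl: "wlog_maj x y" using assms(6) by (simp add: log_maj_def)
  have pre: "\<And>j. j\<le>n \<Longrightarrow> (\<Prod>i<j. X!i) \<le> (\<Prod>i<j. Y!i)"
  proof -
    fix j assume j: "j \<le> n"
    show "(\<Prod>i<j. X!i) \<le> (\<Prod>i<j. Y!i)"
    proof (cases "j = 0")
      case True then show ?thesis by simp
    next
      case False
      then have "prod_list (take j X) \<le> prod_list (take j Y)"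
        using wl j assms(1) by (auto simp: wlog_maj_def X_def Y_def)
      then show ?thesis using j lX lY by (simp add: prod_take)
    qed
  qed
  have M: "(\<Prod>i<k. 1 + X!i) \<le> (\<Prod>i<k. 1 + Y!i) \<and>
         (take k X \<noteq> take k Y \<longrightarrow> (\<Prod>i<k. 1 + X!i) < (\<Prod>i<k. 1 + Y!i))"
    if "k \<le> n" for k
    by (rule main_take[OF lX lY]) (use dec a0 b0 pre that in auto)
  have W: "wlog_maj (tilde x) (tilde y)"
    unfolding wlog_maj_def
  proof (intro conjI ballI)
    show "length (tilde x) = length (tilde y)" using assms by (simp add: tilde_def)
    fix k assume "k \<in> {1..length (tilde x)}"
    then have k: "k \<le> n" using assms by (simp add: tilde_def)
    show "prod_list (take k (decr (tilde x))) \<le> prod_list (take k (decr (tilde y)))"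
      unfolding decr_tilde using M[OF k] k lX lY
      by (simp add: prod_take_tilde X_def Y_def)
  qed
  have XY: "X \<noteq> Y" using assms(5) by (metis X_def Y_def decr_mset)
  have S: "(\<Prod>i<n. 1 + X!i) < (\<Prod>i<n. 1 + Y!i)" using M[of n] XY lX lY by simp
  have px: "(\<Prod>k<n. 1 + x ! k) = (\<Prod>i<n. 1 + X!i)"
  proof -
    have "(\<Prod>k<n. 1 + x ! k) = prod_list (tilde x)" using prod_take_tilde[of n x] assms(1) by (simp add: tilde_def)
    also have "\<dots> = prod_list (tilde X)" by (rule prod_tilde_perm) (simp add: X_def decr_mset)
    also have "\<dots> = (\<Prod>i<n. 1 + X!i)" using prod_take_tilde[of n X] lX by (simp add: tilde_def)
    finally show ?thesis .
  qed
  have py: "(\<Prod>k<n. 1 + y ! k) = (\<Prod>i<n. 1 + Y!i)"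
  proof -
    have "(\<Prod>k<n. 1 + y ! k) = prod_list (tilde y)" using prod_take_tilde[of n y] assms(2) by (simp add: tilde_def)
    also have "\<dots> = prod_list (tilde Y)" by (rule prod_tilde_perm) (simp add: Y_def decr_mset)
    also have "\<dots> = (\<Prod>i<n. 1 + Y!i)" using prod_take_tilde[of n Y] lY by (simp add: tilde_def)
    finally show ?thesis .
  qed
  have F: "(\<Prod>k<n. 1 + x ! k) < (\<Prod>k<n. 1 + y ! k)" using S px py by simp
  have "prod_list (tilde x) \<noteq> prod_list (tilde y)"
    using F prod_take_tilde[of n x] prod_take_tilde[of n y] assms(1,2) by (simp add: tilde_def)
  then show ?thesis using W F by (simp add: log_maj_def)
qed

end
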